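(* Let $m\ge 2$ and let $n_1,\dots,n_m\ge 4$ be even. Then the strong metric dimension of the even chain cycle satisfies $$sdim(\mathcal{C}(C_{n_1},\dots,C_{n_m}))=1+\sum_{i=1}^{m}\frac{n_i-2}{2}.$$
   Context: Let $C_{n_1},\dots,C_{n_m}$ be pairwise disjoint cycles, $V(C_{n_i})=\{v^i_1,\dots,v^i_{n_i}\}$ with $v^i_j$ adjacent to $v^i_{j+1}$ (indices mod $n_i$). The even chain cycle (all $n_i$ even) is obtained by identifying $v^i_{n_i/2+1}$ with $v^{i+1}_1$ for $i=1,\dots,m-1$. A vertex $w$ strongly resolves distinct vertices $u,v$ if $u$ lies on some shortest $v$–$w$ path or $v$ lies on some shortest $u$–$w$ path. A set $W\subseteq V(G)$ is a strong resolving set if every pair of distinct vertices is strongly resolved by some $w\in W$; $sdim(G)$ is the minimum size of a strong resolving set. *)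

theory Defs
  imports Main
begin

definition walk :: "('a \<Rightarrow> 'a \<Rightarrow> bool) \<Rightarrow> 'a list \<Rightarrow> bool" where
  "walk E xs \<longleftrightarrow> xs \<noteq> [] \<and> (\<forall>k. Suc k < length xs \<longrightarrow> E (xs ! k) (xs ! Suc k))"

definition gdist :: "'a set \<Rightarrow> ('a \<Rightarrow> 'a \<Rightarrow> bool) \<Rightarrow> 'a \<Rightarrow> 'a \<Rightarrow> nat" where
  "gdist V E u v = (LEAST k. \<exists>xs. walk E xs \<and> set xs \<subseteq> V \<and> hd xs = u \<and> last xs = v
                                    \<and> length xs = Suc k)"

definition shortest_path :: "'a set \<Rightarrow> ('a \<Rightarrow> 'a \<Rightarrow> bool) \<Rightarrow> 'a \<Rightarrow> 'a \<Rightarrow> 'a list \<Rightarrow> bool" where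
  "shortest_path V E u v p \<longleftrightarrow> walk E p \<and> set p \<subseteq> V \<and> hd p = u \<and> last p = v
                                \<and> length p = Suc (gdist V E u v)"

definition strongly_resolves ::
  "'a set \<Rightarrow> ('a \<Rightarrow> 'a \<Rightarrow> bool) \<Rightarrow> 'a \<Rightarrow> 'a \<Rightarrow> 'a \<Rightarrow> bool" where
  "strongly_resolves V E w u v \<longleftrightarrow>
     (\<exists>p. shortest_path V E v w p \<and> u \<in> set p) \<or> (\<exists>p. shortest_path V E u w p \<and> v \<in> set p)"

definition strong_resolving_set :: "'a set \<Rightarrow> ('a \<Rightarrow> 'a \<Rightarrow> bool) \<Rightarrow> 'a set \<Rightarrow> bool" where
  "strong_resolving_set V E W \<longleftrightarrow> W \<subseteq> V \<and>
     (\<forall>u\<in>V. \<forall>v\<in>V. u \<noteq> v \<longrightarrow> (\<exists>w\<in>W. strongly_resolves V E w u v))"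

definition sdim :: "'a set \<Rightarrow> ('a \<Rightarrow> 'a \<Rightarrow> bool) \<Rightarrow> nat" where
  "sdim V E = (LEAST k. \<exists>W. strong_resolving_set V E W \<and> finite W \<and> card W = k)"

(* Vertex v^i_j is the pair (i,j),
   1 <= i <= m, 1 <= j <= n i.  The identification of v^i_{n_i/2+1} with v^{i+1}_1
   is realised by the representative map chain_rep, sending (i+1,1) to (i, n_i/2+1). *)
definition chain_rep :: "(nat \<Rightarrow> nat) \<Rightarrow> nat \<times> nat \<Rightarrow> nat \<times> nat" where
  "chain_rep n p = (if 2 \<le> fst p \<and> snd p = 1 then (fst p - 1, n (fst p - 1) div 2 + 1) else p)"

definition chain_V :: "nat \<Rightarrow> (nat \<Rightarrow> nat) \<Rightarrow> (nat \<times> nat) set" where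
  "chain_V m n = chain_rep n ` {(i, j). 1 \<le> i \<and> i \<le> m \<and> 1 \<le> j \<and> j \<le> n i}"

definition chain_E :: "nat \<Rightarrow> (nat \<Rightarrow> nat) \<Rightarrow> nat \<times> nat \<Rightarrow> nat \<times> nat \<Rightarrow> bool" where
  "chain_E m n a b \<longleftrightarrow> (\<exists>i j. 1 \<le> i \<and> i \<le> m \<and> 1 \<le> j \<and> j \<le> n i \<and>
       {a, b} = {chain_rep n (i, j), chain_rep n (i, j mod n i + 1)})"

end

theory Submission
  imports Defs
begin


lemma walk_single[simp]: "walk E [x]"
  by (simp add: walk_def)

lemma walk_Cons2: "walk E (x # y # xs) \<longleftrightarrow> E x y \<and> walk E (y # xs)"
  unfolding walk_def
  by (auto simp: nth_Cons split: nat.splits)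

lemma walk_take: "walk E xs \<Longrightarrow> k < length xs \<Longrightarrow> walk E (take (Suc k) xs)"
  unfolding walk_def by auto

lemma walk_drop: "walk E xs \<Longrightarrow> k < length xs \<Longrightarrow> walk E (drop k xs)"
  unfolding walk_def by (auto simp: add.commute)

lemma walk_append: "walk E xs \<Longrightarrow> walk E ys \<Longrightarrow> last xs = hd ys \<Longrightarrow> walk E (xs @ tl ys)"
proof (induction xs rule: induct_list012)
  case 1 then show ?case by (simp add: walk_def)
next
  case (2 x) then show ?case by (cases ys; cases "tl ys") (auto simp: walk_Cons2)
next
  case (3 x y zs) then show ?case by (auto simp: walk_Cons2)
qed

lemma walk_rev: "(\<And>a b. E a b \<Longrightarrow> E b a) \<Longrightarrow> walk E xs \<Longrightarrow> walk E (rev xs)"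
proof (induction xs rule: induct_list012)
  case 1 then show ?case by (simp add: walk_def)
next
  case (2 x) then show ?case by simp
next
  case (3 x y zs)
  have "walk E (rev (y # zs))" using 3 by (auto simp: walk_Cons2)
  moreover have "walk E [y, x]" using 3 by (auto simp: walk_Cons2)
  ultimately have "walk E (rev (y#zs) @ tl [y,x])"
    by (intro walk_append) auto
  then show ?case by simp
qed

lemma walk_lip:
  fixes f :: "'a \<Rightarrow> int"
  assumes "\<And>a b. E a b \<Longrightarrow> \<bar>f a - f b\<bar> \<le> 1" "walk E xs"
  shows "\<bar>f (hd xs) - f (last xs)\<bar> \<le> int (length xs) - 1"
  using assms(2)
proof (induction xs rule: induct_list012)
  case 1 then show ?case by (simp add: walk_def)
next
  case (2 x) then show ?case by simp
next
  case (3 x y zs)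
  then have "E x y" "walk E (y#zs)" by (auto simp: walk_Cons2)
  with 3 assms(1)[of x y] show ?case by auto
qed

lemma set_tl_sub: "x \<in> set (tl q) \<Longrightarrow> x \<in> set q"
  by (cases q) auto

lemma maxex: "finite (S::'a set) \<Longrightarrow> a \<in> S \<Longrightarrow> \<exists>x\<in>S. \<forall>x'\<in>S. (f::'a\<Rightarrow>nat) x' \<le> f x"
proof -
  assume "finite S" "a \<in> S"
  then have "Max (f ` S) \<in> f ` S" by (intro Max_in) auto
  then obtain x where "x \<in> S" "f x = Max (f ` S)" by auto
  then show ?thesis using \<open>finite S\<close> by (intro bexI[of _ x]) auto
qed

locale cgraph =
  fixes V :: "'a set" and E :: "'a \<Rightarrow> 'a \<Rightarrow> bool"
  assumes finV: "finite V"
    and symE: "\<And>a b. E a b \<Longrightarrow> E b a"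
    and conn: "\<And>u v. u \<in> V \<Longrightarrow> v \<in> V \<Longrightarrow> \<exists>xs. walk E xs \<and> set xs \<subseteq> V \<and> hd xs = u \<and> last xs = v"
begin

abbreviation "d \<equiv> gdist V E"

lemma d_le: "walk E xs \<Longrightarrow> set xs \<subseteq> V \<Longrightarrow> d (hd xs) (last xs) \<le> length xs - 1"
  unfolding gdist_def
  by (rule Least_le) (rule exI[of _ xs], auto simp: walk_def)

lemma d_le': "walk E xs \<Longrightarrow> set xs \<subseteq> V \<Longrightarrow> hd xs = u \<Longrightarrow> last xs = v \<Longrightarrow> length xs = Suc k \<Longrightarrow> d u v \<le> k"
  using d_le by fastforce

lemma sp_ex: assumes "u \<in> V" "v \<in> V" shows "\<exists>p. shortest_path V E u v p"
proof -
  obtain xs where xs: "walk E xs" "set xs \<subseteq> V" "hd xs = u" "last xs = v" using conn assms by blast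
  then have "\<exists>k xs. walk E xs \<and> set xs \<subseteq> V \<and> hd xs = u \<and> last xs = v \<and> length xs = Suc k"
    by (intro exI[of _ "length xs - 1"] exI[of _ xs]) (auto simp: walk_def)
  from LeastI_ex[OF this] show ?thesis unfolding shortest_path_def gdist_def by blast
qed

lemma sp_props: "shortest_path V E u v p \<Longrightarrow> walk E p \<and> set p \<subseteq> V \<and> hd p = u \<and> last p = v \<and> length p = Suc (d u v)"
  by (simp add: shortest_path_def)

lemma tri: assumes "u \<in> V" "v \<in> V" "w \<in> V" shows "d u w \<le> d u v + d v w"
proof -
  obtain p q where p: "shortest_path V E u v p" and q: "shortest_path V E v w q" using sp_ex assms by blast
  have "walk E (p @ tl q)" using p q by (intro walk_append) (auto simp: shortest_path_def)
  moreover have "set (p @ tl q) \<subseteq> V" using p q by (auto simp: shortest_path_def dest: set_tl_sub)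
  moreover have "hd (p @ tl q) = u" using p by (auto simp: shortest_path_def walk_def)
  moreover have "last (p @ tl q) = w" using p q
    by (cases q; cases "tl q") (auto simp: shortest_path_def walk_def)
  moreover have "length (p @ tl q) = Suc (d u v + d v w)" using p q by (auto simp: shortest_path_def)
  ultimately show ?thesis by (rule d_le')
qed

lemma concat_sp: assumes "u \<in> V" "v \<in> V" "w \<in> V" "d u v + d v w = d u w"
  shows "\<exists>p. shortest_path V E u w p \<and> v \<in> set p"
proof -
  obtain p q where p: "shortest_path V E u v p" and q: "shortest_path V E v w q" using sp_ex assms by blast
  have "walk E (p @ tl q)" using p q by (intro walk_append) (auto simp: shortest_path_def)
  moreover have "set (p @ tl q) \<subseteq> V" using p q by (auto simp: shortest_path_def dest: set_tl_sub)
  moreover have "hd (p @ tl q) = u" using p by (auto simp: shortest_path_def walk_def)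
  moreover have "last (p @ tl q) = w" using p q
    by (cases q; cases "tl q") (auto simp: shortest_path_def walk_def)
  moreover have "length (p @ tl q) = Suc (d u w)" using p q assms(4) by (auto simp: shortest_path_def)
  moreover have "v \<in> set p" using p by (auto simp: shortest_path_def walk_def)
  ultimately show ?thesis unfolding shortest_path_def by (intro exI[of _ "p @ tl q"]) auto
qed

lemma dsym: assumes "u \<in> V" "v \<in> V" shows "d u v = d v u"
proof -
  have *: "d b a \<le> d a b" if ab: "a \<in> V" "b \<in> V" for a b
  proof -
    obtain p where p: "shortest_path V E a b p" using sp_ex ab by blast
    have "walk E (rev p)" using p walk_rev[OF symE] by (auto simp: shortest_path_def)
    moreover have "p \<noteq> []" using p by (auto simp: shortest_path_def walk_def)
    ultimately show ?thesis using p by (intro d_le'[of "rev p"]) (auto simp: shortest_path_def hd_rev last_rev)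
  qed
  show ?thesis using *[of u v] *[of v u] assms by simp
qed

lemma d_self: "u \<in> V \<Longrightarrow> d u u = 0"
  using d_le'[of "[u]" u u 0] by simp

lemma d_zero: assumes "u \<in> V" "v \<in> V" "d u v = 0" shows "u = v"
proof -
  obtain p where p: "shortest_path V E u v p" using sp_ex assms by blast
  then have "length p = 1" using assms by (simp add: shortest_path_def)
  then show ?thesis using p by (cases p) (auto simp: shortest_path_def)
qed

lemma d_edge: assumes "E u v" "u \<in> V" "v \<in> V" shows "d u v \<le> 1"
  using d_le'[of "[u,v]" u v 1] assms by (simp add: walk_Cons2)

lemma d_edge2: assumes "E u v" "u \<in> V" "v \<in> V" "w \<in> V" shows "d w v \<le> d w u + 1"
  using tri[of w u v] d_edge[OF assms(1-3)] assms by simp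

lemma d_lip:
  fixes f :: "'a \<Rightarrow> int"
  assumes "\<And>a b. E a b \<Longrightarrow> \<bar>f a - f b\<bar> \<le> 1" "u \<in> V" "v \<in> V"
  shows "\<bar>f u - f v\<bar> \<le> int (d u v)"
proof -
  obtain p where p: "shortest_path V E u v p" using sp_ex assms by blast
  then show ?thesis using walk_lip[OF assms(1), where xs=p] by (auto simp: shortest_path_def)
qed

lemma sp_next: assumes "shortest_path V E v w p" "u \<in> set p" "u \<noteq> w"
  shows "\<exists>z\<in>V. E u z \<and> d v u < d v z"
proof -
  from assms(1) have p: "walk E p" "set p \<subseteq> V" "hd p = v" "last p = w" "length p = Suc (d v w)"
    by (auto simp: shortest_path_def)
  obtain k where k: "k < length p" "p ! k = u" using assms(2) by (auto simp: in_set_conv_nth)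
  have kl: "Suc k < length p"
  proof (rule ccontr)
    assume "\<not> Suc k < length p"
    then have "k = length p - 1" using k by simp
    then have "u = last p" using k p by (simp add: last_conv_nth walk_def)
    then show False using assms p by simp
  qed
  define z where "z = p ! Suc k"
  have Euz: "E u z" using p kl k unfolding walk_def z_def by auto
  have zV: "z \<in> V" using p kl z_def by auto
  have uV: "u \<in> V" "v \<in> V" "w \<in> V" using p k assms(2) by (auto simp: walk_def)
  have "d v u \<le> k"
    by (rule d_le'[of "take (Suc k) p"]) (use p k in \<open>auto simp: walk_take last_conv_nth hd_conv_nth walk_def intro: walk_take dest: in_set_takeD\<close>)
  moreover have "d z w \<le> length p - Suc (Suc k)"
    by (rule d_le'[of "drop (Suc k) p"]) (use p kl in \<open>auto simp: walk_drop hd_drop_conv_nth z_def walk_def dest: in_set_dropD\<close>)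
  moreover have "d v w \<le> d v z + d z w" using tri uV zV by auto
  ultimately have "d v u < d v z" using p kl by linarith
  then show ?thesis using Euz zV by blast
qed

definition mmd where
  "mmd x y \<longleftrightarrow> (\<forall>z\<in>V. E x z \<longrightarrow> d y z \<le> d y x) \<and> (\<forall>z\<in>V. E y z \<longrightarrow> d x z \<le> d x y)"

lemma mmd_res: assumes "mmd x y" "strongly_resolves V E w x y" shows "w = x \<or> w = y"
proof (rule ccontr)
  assume ne: "\<not> (w = x \<or> w = y)"
  from assms(2) consider p where "shortest_path V E y w p" "x \<in> set p" | p where "shortest_path V E x w p" "y \<in> set p"
    unfolding strongly_resolves_def by blast
  then show False
  proof cases
    case 1
    then obtain z where "z \<in> V" "E x z" "d y x < d y z" using sp_next ne by metis
    then show False using assms(1) unfolding mmd_def by force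
  next
    case 2
    then obtain z where "z \<in> V" "E y z" "d x y < d x z" using sp_next ne by metis
    then show False using assms(1) unfolding mmd_def by force
  qed
qed

lemma cover_srs:
  assumes WV: "W \<subseteq> V" and cov: "\<And>x y. x \<in> V \<Longrightarrow> y \<in> V \<Longrightarrow> x \<noteq> y \<Longrightarrow> mmd x y \<Longrightarrow> x \<in> W \<or> y \<in> W"
  shows "strong_resolving_set V E W"
  unfolding strong_resolving_set_def
proof (intro conjI WV ballI impI)
  fix u v assume uV: "u \<in> V" and vV: "v \<in> V" and uv: "u \<noteq> v"
  define S1 where "S1 = {x\<in>V. d v u + d u x = d v x}"
  have "u \<in> S1" using uV vV d_self by (simp add: S1_def)
  moreover have "finite S1" using finV by (simp add: S1_def)
  ultimately obtain x where x: "x \<in> S1" "\<forall>x'\<in>S1. d v x' \<le> d v x"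
    using maxex[of S1 u "d v"] by blast
  have xV: "x \<in> V" and hx: "d v u + d u x = d v x" using x(1) by (auto simp: S1_def)
  define S2 where "S2 = {y\<in>V. d x v + d v y = d x y}"
  have "v \<in> S2" using xV vV d_self by (simp add: S2_def)
  moreover have "finite S2" using finV by (simp add: S2_def)
  ultimately obtain y where y: "y \<in> S2" "\<forall>y'\<in>S2. d x y' \<le> d x y"
    using maxex[of S2 v "d x"] by blast
  have yV: "y \<in> V" and hy: "d x v + d v y = d x y" using y(1) by (auto simp: S2_def)
  have xy: "x \<noteq> y"
  proof
    assume "x = y"
    then have "d x v = 0" using hy d_self xV by simp
    then have "d v x = 0" using dsym xV vV by simp
    then have "d v u + d u v = 0" using hx d_zero[OF vV xV] d_self vV by simp
    then show False using d_zero[OF uV vV] uv by simp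
  qed
  have m1: "\<forall>z\<in>V. E x z \<longrightarrow> d y z \<le> d y x"
  proof (intro ballI impI, rule ccontr)
    fix z assume zV: "z \<in> V" and Exz: "E x z" and c: "\<not> d y z \<le> d y x"
    have e1: "d y z \<le> d y x + 1" using d_edge2[OF Exz xV zV yV] .
    have e2: "d v z \<le> d v x + 1" using d_edge2[OF Exz xV zV vV] .
    have t1: "d y z \<le> d y v + d v z" using tri yV vV zV by simp
    have t2: "d u z \<le> d u x + 1" using d_edge2[OF Exz xV zV uV] .
    have t3: "d v z \<le> d v u + d u z" using tri vV uV zV by simp
    have s1: "d y x = d x y" "d y v = d v y" "d v x = d x v" using dsym xV yV vV by auto
    have "d v z = d v x + 1" using c e1 e2 t1 s1 hy by linarith
    then have "z \<in> S1" using t2 t3 hx zV unfolding S1_def by simp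
    then show False using bspec[OF x(2), of z] \<open>d v z = d v x + 1\<close> by simp
  qed
  have m2: "\<forall>z\<in>V. E y z \<longrightarrow> d x z \<le> d x y"
  proof (intro ballI impI, rule ccontr)
    fix z assume zV: "z \<in> V" and Eyz: "E y z" and c: "\<not> d x z \<le> d x y"
    have e1: "d x z \<le> d x y + 1" using d_edge2[OF Eyz yV zV xV] .
    have e2: "d v z \<le> d v y + 1" using d_edge2[OF Eyz yV zV vV] .
    have t1: "d x z \<le> d x v + d v z" using tri xV vV zV by simp
    have "d x z = d x v + d v z" using c e1 e2 t1 hy by linarith
    then have "z \<in> S2" using zV unfolding S2_def by simp
    then show False using bspec[OF y(2), of z] c by simp
  qed
  have "mmd x y" unfolding mmd_def using m1 m2 by blast
  then have "x \<in> W \<or> y \<in> W" using cov xV yV xy by blast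
  then show "\<exists>w\<in>W. strongly_resolves V E w u v"
  proof
    assume "x \<in> W"
    moreover have "\<exists>p. shortest_path V E v x p \<and> u \<in> set p" using concat_sp[OF vV uV xV hx] .
    ultimately show ?thesis unfolding strongly_resolves_def by blast
  next
    assume "y \<in> W"
    have a1: "d u y \<le> d u v + d v y" using tri uV vV yV by simp
    have a2: "d x y \<le> d x u + d u y" using tri xV uV yV by simp
    have s: "d x v = d v x" "d x u = d u x" "d u v = d v u" using dsym xV uV vV by auto
    have "d u v + d v y = d u y" using a1 a2 s hx hy by linarith
    then have "\<exists>p. shortest_path V E u y p \<and> v \<in> set p" using concat_sp[OF uV vV yV] by simp
    then show ?thesis using \<open>y \<in> W\<close> unfolding strongly_resolves_def by blast
  qed
qed

end

lemma modsucc: "(0::int) < M \<Longrightarrow> (x + 1) mod M = (if x mod M = M - 1 then 0 else x mod M + 1)"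
proof -
  assume M: "0 < M"
  have "(x + 1) mod M = (x mod M + 1) mod M" by (simp add: mod_add_left_eq)
  moreover have "0 \<le> x mod M" "x mod M < M" using M by auto
  ultimately show ?thesis
    by (cases "x mod M = M - 1") (auto simp: mod_pos_pos_trivial)
qed
lemma cm_lip: "(0::int) < M \<Longrightarrow> \<bar>min ((x+1) mod M) (M - (x+1) mod M) - min (x mod M) (M - x mod M)\<bar> \<le> 1"
  using modsucc[of M x] by (auto simp: min_def)


locale chain =
  fixes m :: nat and n :: "nat \<Rightarrow> nat"
  assumes m2: "m \<ge> 2" and ev: "\<And>i. 1 \<le> i \<Longrightarrow> i \<le> m \<Longrightarrow> even (n i) \<and> n i \<ge> 4"
begin

abbreviation "N i \<equiv> n i div 2"
abbreviation "rep \<equiv> chain_rep n"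
abbreviation "V \<equiv> chain_V m n"
abbreviation "E \<equiv> chain_E m n"
definition "D = {(i, j). 1 \<le> i \<and> i \<le> m \<and> 1 \<le> j \<and> j \<le> n i}"

lemma nN: "1 \<le> i \<Longrightarrow> i \<le> m \<Longrightarrow> n i = 2 * N i \<and> N i \<ge> 2"
  using ev[of i] by auto

lemma V_def': "V = rep ` D" by (simp add: chain_V_def D_def)

lemma rep_eq: "rep (k, l) = (if 2 \<le> k \<and> l = 1 then (k - 1, N (k - 1) + 1) else (k, l))"
  by (simp add: chain_rep_def)

lemma inD[simp]: "(k, l) \<in> D \<longleftrightarrow> 1 \<le> k \<and> k \<le> m \<and> 1 \<le> l \<and> l \<le> n k"
  by (simp add: D_def)

lemma repV: "(k, l) \<in> D \<Longrightarrow> rep (k, l) \<in> V"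
  by (simp add: V_def')

lemma E_iff: "E a b \<longleftrightarrow> (\<exists>k l. (k, l) \<in> D \<and> {a, b} = {rep (k, l), rep (k, l mod n k + 1)})"
  unfolding chain_E_def by auto

lemma succD: "(k, l) \<in> D \<Longrightarrow> (k, l mod n k + 1) \<in> D"
  using nN[of k] by (auto simp: Suc_le_eq)

lemma symE: "E a b \<Longrightarrow> E b a"
  unfolding E_iff by (auto simp: insert_commute)

lemma EV: "E a b \<Longrightarrow> a \<in> V \<and> b \<in> V"
  unfolding E_iff using repV succD by (auto simp: doubleton_eq_iff)

lemma finV: "finite V"
proof -
  have "D \<subseteq> {1..m} \<times> {1..Max (n ` {1..m})}"
    by (auto simp: D_def) (meson Max_ge atLeastAtMost_iff finite_atLeastAtMost finite_imageI image_eqI le_trans)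
  then have "finite D" by (rule finite_subset) auto
  then show ?thesis by (simp add: V_def')
qed

lemma walk_map: "(\<And>t. t < len \<Longrightarrow> E (f t) (f (Suc t))) \<Longrightarrow> walk E (map f [0..<Suc len])"
  unfolding walk_def by (auto simp del: upt_Suc)

lemma cyc_E: "1 \<le> i \<Longrightarrow> i \<le> m \<Longrightarrow> E (rep (i, x mod n i + 1)) (rep (i, Suc x mod n i + 1))"
  unfolding E_iff
  apply (rule exI[of _ i], rule exI[of _ "x mod n i + 1"])
  using nN[of i] by (auto simp: Suc_le_eq mod_Suc_eq)

definition "cw i q len = map (\<lambda>t. rep (i, (q + t) mod n i + 1)) [0..<Suc len]"

lemma cw: assumes "1 \<le> i" "i \<le> m"
  shows "walk E (cw i q len) \<and> set (cw i q len) \<subseteq> V \<and> hd (cw i q len) = rep (i, q mod n i + 1)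
     \<and> last (cw i q len) = rep (i, (q + len) mod n i + 1) \<and> length (cw i q len) = Suc len"
proof -
  have "walk E (cw i q len)" unfolding cw_def
    by (rule walk_map) (use cyc_E[OF assms] in \<open>simp add: add.commute add.left_commute\<close>)
  moreover have "set (cw i q len) \<subseteq> V" unfolding cw_def using assms nN[of i]
    by (auto intro!: repV simp: Suc_le_eq)
  moreover have "hd (cw i q len) = rep (i, q mod n i + 1)" unfolding cw_def
    by (simp del: upt_Suc add: hd_map upt_conv_Cons)
  moreover have "last (cw i q len) = rep (i, (q + len) mod n i + 1)" unfolding cw_def
    by (simp add: last_map)
  ultimately show ?thesis by (simp add: cw_def)
qed

definition "reach u v \<longleftrightarrow> (\<exists>xs. walk E xs \<and> set xs \<subseteq> V \<and> hd xs = u \<and> last xs = v)"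

lemma reach_trans: "reach u v \<Longrightarrow> reach v w \<Longrightarrow> reach u w"
  unfolding reach_def
proof (elim exE conjE)
  fix p q assume p: "walk E p" "set p \<subseteq> V" "hd p = u" "last p = v"
    and q: "walk E q" "set q \<subseteq> V" "hd q = v" "last q = w"
  show "\<exists>xs. walk E xs \<and> set xs \<subseteq> V \<and> hd xs = u \<and> last xs = w"
  proof (intro exI conjI)
    show "walk E (p @ tl q)" using p q by (intro walk_append) auto
    show "set (p @ tl q) \<subseteq> V" using p q by (auto dest: set_tl_sub)
    show "hd (p @ tl q) = u" using p by (auto simp: walk_def)
    show "last (p @ tl q) = w" using p q by (cases q; cases "tl q") (auto simp: walk_def)
  qed
qed

lemma reach_sym: "reach u v \<Longrightarrow> reach v u"
  unfolding reach_def
proof (elim exE conjE)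
  fix p assume p: "walk E p" "set p \<subseteq> V" "hd p = u" "last p = v"
  then show "\<exists>xs. walk E xs \<and> set xs \<subseteq> V \<and> hd xs = v \<and> last xs = u"
  proof (intro exI[of _ "rev p"] conjI)
    show "walk E (rev p)" by (rule walk_rev) (use symE p in auto)
  qed (use p in \<open>auto simp: hd_rev last_rev walk_def\<close>)
qed

lemma reach_cyc: "1 \<le> i \<Longrightarrow> i \<le> m \<Longrightarrow> reach (rep (i, q mod n i + 1)) (rep (i, (q + len) mod n i + 1))"
  unfolding reach_def using cw by blast

lemma reach_all: "(k, l) \<in> D \<Longrightarrow> reach (1, 1) (rep (k, l))"
proof (induction k arbitrary: l)
  case 0 then show ?case by simp
next
  case (Suc k)
  have l: "(l - 1) mod n (Suc k) + 1 = l" using Suc.prems by auto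
  have c: "reach (rep (Suc k, 0 mod n (Suc k) + 1)) (rep (Suc k, (0 + (l - 1)) mod n (Suc k) + 1))"
    by (rule reach_cyc) (use Suc.prems in auto)
  show ?case
  proof (cases "k = 0")
    case True
    then show ?thesis using c l by (simp add: chain_rep_def)
  next
    case False
    have "reach (1, 1) (rep (k, N k + 1))" using Suc.prems False nN[of k]
      by (intro Suc.IH) auto
    moreover have "rep (k, N k + 1) = rep (Suc k, 1)" using False Suc.prems nN[of k] by (simp add: chain_rep_def)
    ultimately show ?thesis using c l reach_trans by simp
  qed
qed

lemma conn: "u \<in> V \<Longrightarrow> v \<in> V \<Longrightarrow> \<exists>xs. walk E xs \<and> set xs \<subseteq> V \<and> hd xs = u \<and> last xs = v"
proof -
  assume "u \<in> V" "v \<in> V"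
  then obtain a b where "a \<in> D" "b \<in> D" "u = rep a" "v = rep b" unfolding V_def' by auto
  then have "reach u v" using reach_all reach_sym reach_trans by (metis surj_pair)
  then show ?thesis unfolding reach_def .
qed

sublocale cgraph V E
  by unfold_locales (use finV symE conn in auto)


definition B :: "nat \<Rightarrow> nat" where "B k = (\<Sum>t\<in>{1..<k}. N t)"
definition h :: "nat \<times> nat \<Rightarrow> nat" where
  "h v = B (fst v) + min (snd v - 1) (n (fst v) - snd v + 1)"

lemma B_Suc: "1 \<le> k \<Longrightarrow> B (Suc k) = B k + N k"
  by (simp add: B_def)

lemma B1: "B 1 = 0" by (simp add: B_def)

lemma B_mono: assumes "1 \<le> k" "k < k'" shows "B k + N k \<le> B k'"
proof -
  have "B k + N k = (\<Sum>t\<in>{1..<Suc k}. N t)" using B_Suc assms by (simp add: B_def)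
  also have "\<dots> \<le> (\<Sum>t\<in>{1..<k'}. N t)" by (rule sum_mono2) (use assms in auto)
  finally show ?thesis by (simp add: B_def)
qed

lemma h_rep: assumes "(k, l) \<in> D" shows "h (rep (k, l)) = B k + min (l - 1) (n k - l + 1)"
proof (cases "2 \<le> k \<and> l = 1")
  case True
  then have "rep (k, l) = (k - 1, N (k - 1) + 1)" by (simp add: rep_eq)
  moreover have "n (k - 1) = 2 * N (k - 1)" using nN[of "k - 1"] True assms by auto
  moreover have "B k = B (k - 1) + N (k - 1)" using B_Suc[of "k - 1"] True by (cases k) auto
  ultimately show ?thesis using True by (simp add: h_def min_def; arith)
next
  case False
  then show ?thesis by (auto simp: rep_eq h_def)
qed

lemma h_lip: "E a b \<Longrightarrow> \<bar>int (h a) - int (h b)\<bar> \<le> 1"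
proof -
  assume "E a b"
  then obtain k l where kl: "(k, l) \<in> D" "{a, b} = {rep (k, l), rep (k, l mod n k + 1)}"
    unfolding E_iff by blast
  have n4: "n k \<ge> 4" using ev[of k] kl by auto
  have "\<bar>int (h (rep (k, l))) - int (h (rep (k, l mod n k + 1)))\<bar> \<le> 1"
  proof (cases "l < n k")
    case True
    then show ?thesis using kl h_rep succD by (auto simp: min_def)
  next
    case False
    then have "l = n k" using kl by auto
    then show ?thesis using kl h_rep succD n4 by (auto simp: min_def)
  qed
  then show ?thesis using kl(2) by (auto simp: doubleton_eq_iff)
qed

definition pos :: "nat \<Rightarrow> nat \<times> nat \<Rightarrow> nat" where
  "pos i v = (if fst v < i then 0 else if fst v > i then N i else snd v - 1)"

lemma pos_rep: assumes "(k, l) \<in> D" "1 \<le> i" "i \<le> m"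
  shows "pos i (rep (k, l)) = (if k < i then 0 else if k > i then N i else l - 1)"
proof (cases "2 \<le> k \<and> l = 1")
  case True
  then have "rep (k, l) = (k - 1, N (k - 1) + 1)" by (simp add: rep_eq)
  then show ?thesis using True by (auto simp: pos_def)
next
  case False
  then show ?thesis by (auto simp: rep_eq pos_def)
qed

definition phi :: "nat \<Rightarrow> nat \<Rightarrow> nat \<times> nat \<Rightarrow> int" where
  "phi i q v = min ((int (pos i v) - int q) mod int (n i)) (int (n i) - (int (pos i v) - int q) mod int (n i))"

lemma phi_lip: assumes "1 \<le> i" "i \<le> m" shows "E a b \<Longrightarrow> \<bar>phi i q a - phi i q b\<bar> \<le> 1"
proof -
  assume "E a b"
  then obtain k l where kl: "(k, l) \<in> D" "{a, b} = {rep (k, l), rep (k, l mod n k + 1)}"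
    unfolding E_iff by blast
  have ni: "int (n i) > 0" using ev[of i] assms by auto
  have "\<bar>phi i q (rep (k, l)) - phi i q (rep (k, l mod n k + 1))\<bar> \<le> 1"
  proof (cases "k = i")
    case False
    then show ?thesis using pos_rep[OF kl(1) assms] pos_rep[OF succD[OF kl(1)] assms]
      by (simp add: phi_def)
  next
    case True
    define x where "x = int (l - 1) - int q"
    have p1: "pos i (rep (k, l)) = l - 1" using pos_rep[OF kl(1) assms] True by simp
    have p2: "pos i (rep (k, l mod n k + 1)) = l mod n k" using pos_rep[OF succD[OF kl(1)] assms] True by simp
    have "int (l mod n k) = (int (l - 1) + 1) mod int (n k)" using kl by (auto simp: zmod_int of_nat_diff)
    then have "(int (l mod n k) - int q) mod int (n i) = (x + 1) mod int (n i)"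
      using True by (simp add: x_def mod_diff_left_eq algebra_simps)
    then show ?thesis using cm_lip[OF ni, of x] p1 p2 unfolding phi_def x_def by (simp add: abs_minus_commute)
  qed
  then show ?thesis using kl(2) by (auto simp: doubleton_eq_iff abs_minus_commute)
qed


end

context chain begin

definition "W0 = {(1, 1)} \<union> {(k, l). 1 \<le> k \<and> k \<le> m \<and> 2 \<le> l \<and> l \<le> N k}"
definition "Lo = {(1, 1)} \<union> {(k, l). 1 \<le> k \<and> k \<le> m \<and> N k + 1 \<le> l \<and> l \<le> n k}"

lemma rep_id: assumes "\<not> (2 \<le> k \<and> l = 1)" shows "rep (k, l) = (k, l)"
  using assms by (auto simp: chain_rep_def)

lemma in_V: "(k, l) \<in> D \<Longrightarrow> \<not> (2 \<le> k \<and> l = 1) \<Longrightarrow> (k, l) \<in> V"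
  by (metis repV rep_id)

lemma W0V: "W0 \<subseteq> V"
proof
  fix x assume "x \<in> W0"
  then obtain k l where "x = (k, l)" "(k, l) = (1, 1) \<or> (1 \<le> k \<and> k \<le> m \<and> 2 \<le> l \<and> l \<le> N k)"
    unfolding W0_def by auto
  moreover have "(1, 1) \<in> V" using m2 nN[of 1] by (intro in_V) auto
  moreover have "(k, l) \<in> V" if "1 \<le> k \<and> k \<le> m \<and> 2 \<le> l \<and> l \<le> N k"
    using that nN[of k] by (intro in_V) auto
  ultimately show "x \<in> V" by metis
qed

lemma LoV: "Lo \<subseteq> V"
proof
  fix x assume "x \<in> Lo"
  then obtain k l where "x = (k, l)" "(k, l) = (1, 1) \<or> (1 \<le> k \<and> k \<le> m \<and> N k + 1 \<le> l \<and> l \<le> n k)"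
    unfolding Lo_def by auto
  moreover have "(1, 1) \<in> V" using m2 nN[of 1] by (intro in_V) auto
  moreover have "(k, l) \<in> V" if "1 \<le> k \<and> k \<le> m \<and> N k + 1 \<le> l \<and> l \<le> n k"
    using that nN[of k] by (intro in_V) auto
  ultimately show "x \<in> V" by metis
qed

lemma V_cover: assumes "v \<in> V" shows "v \<in> W0 \<or> v \<in> Lo"
proof -
  obtain k l where kl: "(k, l) \<in> D" "v = rep (k, l)" using assms unfolding V_def' by auto
  show ?thesis
  proof (cases "2 \<le> k \<and> l = 1")
    case True
    have k1: "1 \<le> k - 1" "k - 1 \<le> m" using True kl by auto
    then show ?thesis using kl True nN[OF k1] by (auto simp: rep_eq Lo_def)
  next
    case False
    then show ?thesis using kl nN[of k] by (auto simp: rep_eq Lo_def W0_def)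
  qed
qed

lemma h11: "h (1, 1) = 0" by (simp add: h_def B_def)

lemma h_Lo: "1 \<le> k \<Longrightarrow> k \<le> m \<Longrightarrow> N k + 1 \<le> l \<Longrightarrow> l \<le> n k \<Longrightarrow> h (k, l) = B k + (n k - l + 1)"
  using nN[of k] by (auto simp: h_def min_def)

lemma Lo_cases: "x \<in> Lo \<Longrightarrow> x = (1, 1) \<or> (\<exists>k l. x = (k, l) \<and> 1 \<le> k \<and> k \<le> m \<and> N k + 1 \<le> l \<and> l \<le> n k)"
  unfolding Lo_def by auto

lemma Lo_pos: "x \<in> Lo \<Longrightarrow> x \<noteq> (1, 1) \<Longrightarrow> h x \<ge> 1"
  using Lo_cases h_Lo by fastforce


lemma Lo_inj: assumes "x \<in> Lo" "y \<in> Lo" "h x = h y" shows "x = y"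
proof -
  have *: "False" if "1 \<le> k" "k \<le> m" "N k + 1 \<le> l" "l \<le> n k" "1 \<le> k'" "k' \<le> m" "N k' + 1 \<le> l'" "l' \<le> n k'"
    "k < k'" "h (k, l) = h (k', l')" for k l k' l'
  proof -
    have e: "h (k, l) = B k + (n k - l + 1)" using h_Lo[OF that(1-4)] by simp
    have k1: "1 \<le> k" "k \<le> m" using that by auto
    define a where "a = N k"
    have a: "n k = 2 * a" "N k = a" using nN[OF k1] a_def by auto
    have "n k - l + 1 \<le> a" using a that(3,4) by linarith
    then have "h (k, l) \<le> B k + N k" using e a by simp
    moreover have "h (k', l') \<ge> B k' + 1" using h_Lo[OF that(5-8)] by simp
    moreover have "B k + N k \<le> B k'" using B_mono[of k k'] that(1,9) by simp
    ultimately show False using that(10) by linarith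
  qed
  show ?thesis
  proof (cases "x = (1, 1) \<or> y = (1, 1)")
    case True
    show ?thesis
    proof (cases "x = (1, 1)")
      case True
      then have "h y = 0" using assms h11 by simp
      have "y = (1, 1)"
      proof (rule ccontr)
        assume "y \<noteq> (1, 1)"
        with Lo_pos[OF assms(2)] have "1 \<le> h y" .
        with \<open>h y = 0\<close> show False by simp
      qed
      then show ?thesis using True by simp
    next
      case False
      then have "y = (1, 1)" using \<open>x = (1, 1) \<or> y = (1, 1)\<close> by simp
      then have "h x = 0" using assms h11 by simp
      have "x = (1, 1)"
      proof (rule ccontr)
        assume "x \<noteq> (1, 1)"
        with Lo_pos[OF assms(1)] have "1 \<le> h x" .
        with \<open>h x = 0\<close> show False by simp
      qed
      then show ?thesis using False by simp
    qed
  next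
    case False
    obtain k l where x: "x = (k, l)" "1 \<le> k" "k \<le> m" "N k + 1 \<le> l" "l \<le> n k"
      using Lo_cases[OF assms(1)] False by auto
    obtain k' l' where y: "y = (k', l')" "1 \<le> k'" "k' \<le> m" "N k' + 1 \<le> l'" "l' \<le> n k'"
      using Lo_cases[OF assms(2)] False by auto
    have hxy: "h (k, l) = h (k', l')" using assms(3) x y by simp
    have "\<not> k < k'" using *[OF x(2-5) y(2-5) _ hxy] by blast
    moreover have "\<not> k' < k" using *[OF y(2-5) x(2-5) _ hxy[symmetric]] by blast
    ultimately have kk: "k = k'" by simp
    have "B k + (n k - l + 1) = B k + (n k - l' + 1)" using h_Lo[OF x(2-5)] h_Lo[OF y(2-5)] hxy kk by simp
    then have "l = l'" using x(5) y(5) kk by simp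
    then show ?thesis using x y kk by simp
  qed
qed

lemma aux: "n' = 2 * (a::nat) \<Longrightarrow> 1 \<le> a \<Longrightarrow> n' - (a + 1) + 1 = a"
  by arith

lemma E_succ: "(k, l) \<in> D \<Longrightarrow> E (rep (k, l)) (rep (k, l mod n k + 1))"
  unfolding E_iff by (intro exI[of _ k] exI[of _ l]) simp

lemma Lo_down: assumes "x \<in> Lo" "x \<noteq> (1, 1)" shows "\<exists>z\<in>Lo. E x z \<and> h z + 1 = h x"
proof -
  obtain k l where x: "x = (k, l)" "1 \<le> k" "k \<le> m" "N k + 1 \<le> l" "l \<le> n k"
    using Lo_cases[OF assms(1)] assms(2) by auto
  have n2: "n k = 2 * N k" "N k \<ge> 2" using nN x by auto
  have repx: "rep (k, l) = (k, l)" using n2 x by (intro rep_id) auto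
  have Ex: "E x (rep (k, l mod n k + 1))" using E_succ[of k l] x repx by simp
  show ?thesis
  proof (cases "l < n k")
    case True
    then have z: "rep (k, l mod n k + 1) = (k, l + 1)" using x by (simp add: rep_eq)
    show ?thesis using Ex z x True h_Lo[of k l] h_Lo[of k "l+1"] by (intro bexI[of _ "(k, l+1)"]) (auto simp: Lo_def)
  next
    case False
    then have l: "l = n k" using x by simp
    show ?thesis
    proof (cases "k = 1")
      case True
      then have "rep (k, l mod n k + 1) = (1, 1)" using l by (simp add: rep_eq)
      then show ?thesis using Ex x l True h_Lo[of k l] h11 B1 by (intro bexI[of _ "(1,1)"]) (auto simp: Lo_def)
    next
      case False
      then have z: "rep (k, l mod n k + 1) = (k - 1, N (k - 1) + 1)" using l x by (simp add: rep_eq)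
      have k1: "1 \<le> k - 1" "k - 1 \<le> m" using False x by auto
      have "h (k - 1, N (k - 1) + 1) = B (k - 1) + (n (k - 1) - (N (k - 1) + 1) + 1)"
        by (rule h_Lo) (use k1 nN[OF k1] in auto)
      moreover have "n (k - 1) - (N (k - 1) + 1) + 1 = N (k - 1)"
        using nN[OF k1] by (intro aux) (simp_all)
      ultimately have hz: "h (k - 1, N (k - 1) + 1) = B (k - 1) + N (k - 1)" by (simp only:)
      have "B k = B (k - 1) + N (k - 1)" using B_Suc[of "k - 1"] False x by (cases k) auto
      have "(k - 1, N (k - 1) + 1) \<in> Lo" using k1 nN[OF k1] by (auto simp: Lo_def)
      moreover have "h (k, l) = B k + 1" using h_Lo[OF x(2-5)] l by simp
      ultimately show ?thesis using Ex z hz \<open>B k = B (k - 1) + N (k - 1)\<close> x(1)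
        by (intro bexI[of _ "(k - 1, N (k - 1) + 1)"]) auto
    qed
  qed
qed

lemma Lo_dist: "x \<in> Lo \<Longrightarrow> y \<in> Lo \<Longrightarrow> h x \<le> h y \<Longrightarrow> d x y \<le> h y - h x"
proof (induction "h y - h x" arbitrary: y)
  case 0
  then have "x = y" using Lo_inj by simp
  moreover have "y \<in> V" using LoV 0 by auto
  ultimately show ?case using d_self[of y] by simp
next
  case (Suc j)
  then have "y \<noteq> (1, 1)" using h11 by auto
  then obtain z where z: "z \<in> Lo" "E y z" "h z + 1 = h y" using Lo_down Suc.prems by blast
  have "d x z \<le> h z - h x" using Suc z by (intro Suc.hyps) auto
  moreover have "d x y \<le> d x z + 1"
  proof -
    have "z \<in> V" "y \<in> V" "x \<in> V" using z Suc.prems LoV by auto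
    then show ?thesis using d_edge2[OF symE[OF z(2)] \<open>z \<in> V\<close> \<open>y \<in> V\<close> \<open>x \<in> V\<close>] by simp
  qed
  ultimately show ?case using z Suc by linarith
qed

lemma mmd_sym: "mmd x y \<Longrightarrow> mmd y x"
  unfolding mmd_def by blast

lemma not_mmd_Lo: assumes "x \<in> Lo" "y \<in> Lo" "x \<noteq> (1, 1)" "h x < h y" shows "\<not> mmd x y"
proof
  assume mm: "mmd x y"
  obtain z where z: "z \<in> Lo" "E x z" "h z + 1 = h x" using Lo_down assms by blast
  have V: "x \<in> V" "y \<in> V" "z \<in> V" using LoV assms z by auto
  have "\<bar>int (h y) - int (h z)\<bar> \<le> int (d y z)" by (rule d_lip) (use h_lip V in auto)
  moreover have "d y x \<le> h y - h x" using Lo_dist[of x y] assms dsym V by simp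
  moreover have "d y z \<le> d y x" using mm z V unfolding mmd_def by blast
  ultimately show False using z assms by linarith
qed

lemma cover_W0: assumes "x \<in> V" "y \<in> V" "x \<noteq> y" "mmd x y" shows "x \<in> W0 \<or> y \<in> W0"
proof (rule ccontr)
  assume "\<not> (x \<in> W0 \<or> y \<in> W0)"
  then have xy: "x \<in> Lo" "y \<in> Lo" "x \<noteq> (1, 1)" "y \<noteq> (1, 1)" using V_cover assms by (auto simp: W0_def)
  then have "h x \<noteq> h y" using Lo_inj assms by blast
  then show False using not_mmd_Lo[of x y] not_mmd_Lo[of y x] xy assms mmd_sym by (metis linorder_neqE_nat)
qed

lemma srs_W0: "strong_resolving_set V E W0"
  by (rule cover_srs[OF W0V cover_W0])


end

context chain begin

lemma rep_inv: assumes "(k, l) \<in> D" "(i, s) \<in> D" "s = 1 \<longrightarrow> i = 1" "s = N i + 1 \<longrightarrow> i = m" "rep (k, l) = (i, s)"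
  shows "k = i \<and> l = s"
proof (cases "2 \<le> k \<and> l = 1")
  case True
  then have "rep (k, l) = (k - 1, N (k - 1) + 1)" by (simp add: rep_eq)
  then have ik: "i = k - 1" "s = N i + 1" using assms(5) by auto
  then have "i = m" using assms(4) by simp
  moreover have "k \<le> m" using assms(1) by simp
  ultimately show ?thesis using ik(1) True by arith
next
  case False
  then have "rep (k, l) = (k, l)" by (rule rep_id)
  then show ?thesis using assms(5) by simp
qed

lemma nbr: assumes "(i, s) \<in> D" "s = 1 \<longrightarrow> i = 1" "s = N i + 1 \<longrightarrow> i = m" "E (i, s) z"
  shows "z = rep (i, s mod n i + 1) \<or> z = rep (i, if s = 1 then n i else s - 1)"
proof -
  obtain k l where kl: "(k, l) \<in> D" "{(i, s), z} = {rep (k, l), rep (k, l mod n k + 1)}"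
    using assms(4) unfolding E_iff by (elim exE conjE) (rule that; assumption)
  from kl(2) consider "(i, s) = rep (k, l)" "z = rep (k, l mod n k + 1)"
    | "(i, s) = rep (k, l mod n k + 1)" "z = rep (k, l)"
    by (auto simp: doubleton_eq_iff)
  then show ?thesis
  proof cases
    case 1
    then have "k = i \<and> l = s" using rep_inv[OF kl(1) assms(1-3)] by simp
    then show ?thesis using 1 by simp
  next
    case 2
    then have ki: "k = i" and ls: "l mod n k + 1 = s" using rep_inv[OF succD[OF kl(1)] assms(1-3)] by auto
    have "l = (if s = 1 then n i else s - 1)"
    proof (cases "l < n k")
      case True
      then show ?thesis using ls ki kl(1) by auto
    next
      case False
      then have "l = n k" using kl(1) by simp
      then show ?thesis using ls ki by simp
    qed
    then show ?thesis using 2 ki by simp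
  qed
qed

lemma d_cyc: assumes "1 \<le> i" "i \<le> m"
  shows "d (rep (i, q mod n i + 1)) (rep (i, (q + len) mod n i + 1)) \<le> len"
  using cw[OF assms, of q len] d_le' by blast

lemma half: assumes i: "1 \<le> i" "i \<le> m" and q: "1 \<le> q" "q < n i" "q \<noteq> N i"
  shows "\<forall>z\<in>V. E (i, q + 1) z \<longrightarrow> d (rep (i, (q + N i) mod n i + 1)) z \<le> d (rep (i, (q + N i) mod n i + 1)) (i, q + 1)"
proof (intro ballI impI)
  fix z assume zV: "z \<in> V" and Ez: "E (i, q + 1) z"
  define y where "y = rep (i, (q + N i) mod n i + 1)"
  have nn: "n i = 2 * N i" "2 \<le> N i" using nN i by auto
  have xD: "(i, q + 1) \<in> D" using i q by auto
  have yD: "(i, (q + N i) mod n i + 1) \<in> D" using i nn by (auto simp: Suc_le_eq)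
  have xV: "(i, q + 1) \<in> V" using in_V[OF xD] q by simp
  have yV: "y \<in> V" using repV[OF yD] y_def by simp
  have xrep: "rep (i, q mod n i + 1) = (i, q + 1)" using q by (simp add: rep_eq)
  have "\<bar>phi i q y - phi i q (i, q + 1)\<bar> \<le> int (d y (i, q + 1))"
    by (rule d_lip) (use phi_lip[OF i] yV xV in auto)
  moreover have "phi i q (i, q + 1) = 0" by (simp add: phi_def pos_def)
  moreover have "phi i q y = int (N i)"
  proof -
    have p: "pos i y = (q + N i) mod n i" using pos_rep[OF yD i] y_def by simp
    have "(int ((q + N i) mod n i) - int q) mod int (n i) = int (N i)"
    proof -
      have "(int ((q + N i) mod n i) - int q) mod int (n i) = (int q + int (N i) - int q) mod int (n i)"
        by (simp add: zmod_int mod_diff_left_eq)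
      also have "\<dots> = int (N i)" using nn by simp
      finally show ?thesis .
    qed
    then show ?thesis unfolding phi_def p using nn by simp
  qed
  ultimately have low: "N i \<le> d y (i, q + 1)" by simp
  have "z = rep (i, (q + 1) mod n i + 1) \<or> z = rep (i, q)"
    using nbr[OF xD _ _ Ez] q by auto
  then have "d y z \<le> N i - 1"
  proof
    assume z: "z = rep (i, (q + 1) mod n i + 1)"
    have "d z y \<le> N i - 1"
      using d_cyc[OF i, of "q + 1" "N i - 1"] z y_def nn by simp
    moreover have "z \<in> V" using zV .
    ultimately show ?thesis using dsym yV by simp
  next
    assume z: "z = rep (i, q)"
    have e: "(q + N i + (N i - 1)) mod n i + 1 = q"
    proof -
      have "q + N i + (N i - 1) = (q - 1) + n i" using nn q by simp
      then have "(q + N i + (N i - 1)) mod n i = (q - 1 + n i) mod n i" by (simp only:)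
      also have "\<dots> = q - 1" using q by (subst mod_add_self2) simp
      finally show ?thesis using q by simp
    qed
    show ?thesis using d_cyc[OF i, of "q + N i" "N i - 1"] z y_def e by simp
  qed
  then show "d y z \<le> d y (i, q + 1)" using low nn by simp
qed


lemma mmd_a: assumes i: "1 \<le> i" "i \<le> m" and s: "2 \<le> s" "s \<le> N i"
  shows "mmd (i, s) (i, s + N i)"
proof -
  have nn: "n i = 2 * N i" "2 \<le> N i" using nN i by auto
  have h1: "\<forall>z\<in>V. E (i, (s - 1) + 1) z \<longrightarrow> d (rep (i, ((s - 1) + N i) mod n i + 1)) z \<le> d (rep (i, ((s - 1) + N i) mod n i + 1)) (i, (s - 1) + 1)"
    by (rule half) (use i s nn in auto)
  have e1: "rep (i, ((s - 1) + N i) mod n i + 1) = (i, s + N i)"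
  proof -
    have "((s - 1) + N i) mod n i = s - 1 + N i" using s nn by simp
    then show ?thesis using s by (simp add: rep_eq)
  qed
  have h2: "\<forall>z\<in>V. E (i, (s + N i - 1) + 1) z \<longrightarrow> d (rep (i, ((s + N i - 1) + N i) mod n i + 1)) z \<le> d (rep (i, ((s + N i - 1) + N i) mod n i + 1)) (i, (s + N i - 1) + 1)"
    by (rule half) (use i s nn in auto)
  have e2: "rep (i, ((s + N i - 1) + N i) mod n i + 1) = (i, s)"
  proof -
    have "(s + N i - 1) + N i = (s - 1) + n i" using s nn by simp
    then have "((s + N i - 1) + N i) mod n i = (s - 1 + n i) mod n i" by (simp only:)
    also have "\<dots> = s - 1" using s nn by (subst mod_add_self2) simp
    finally show ?thesis using s by (simp add: rep_eq)
  qed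
  have a1: "s - 1 + 1 = s" "s + N i - 1 + 1 = s + N i" using s by auto
  show ?thesis unfolding mmd_def using h1 h2 e1 e2 a1 by simp
qed

lemma t_facts: "(m, N m + 1) \<in> Lo" "h (m, N m + 1) = B m + N m" "(1, 1) \<in> Lo"
proof -
  have k: "1 \<le> m" "m \<le> m" using m2 by auto
  have nn: "n m = 2 * N m" "2 \<le> N m" using nN[OF k] by auto
  show "(m, N m + 1) \<in> Lo" using k nn by (auto simp: Lo_def)
  have "h (m, N m + 1) = B m + (n m - (N m + 1) + 1)" by (rule h_Lo) (use k nn in auto)
  moreover have "n m - (N m + 1) + 1 = N m" using nn by (intro aux) auto
  ultimately show "h (m, N m + 1) = B m + N m" by (simp only:)
  show "(1, 1) \<in> Lo" by (simp add: Lo_def)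
qed

lemma mmd_b: "mmd (1, 1) (m, N m + 1)"
proof -
  define t where "t = (m, N m + 1)"
  define L where "L = B m + N m"
  have m1: "1 \<le> m" "m \<le> m" using m2 by auto
  have nm: "n m = 2 * N m" "2 \<le> N m" using nN[OF m1] by auto
  have one: "1 \<le> (1::nat)" "1 \<le> m" using m2 by auto
  have n1: "n 1 = 2 * N 1" "2 \<le> N 1" using nN[OF one] by auto
  have tLo: "t \<in> Lo" and ht: "h t = L" and oLo: "(1, 1) \<in> Lo" using t_facts t_def L_def by auto
  have tV: "t \<in> V" and oV: "(1, 1) \<in> V" using tLo oLo LoV by auto
  have "\<bar>int (h t) - int (h (1, 1))\<bar> \<le> int (d t (1, 1))" by (rule d_lip) (use h_lip tV oV in auto)
  then have low: "L \<le> d t (1, 1)" using ht h11 by simp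
  have BmN1: "N 1 \<le> B m" using B_mono[of 1 m] m2 B1 by simp
  have p1: "\<forall>z\<in>V. E (1, 1) z \<longrightarrow> d t z \<le> d t (1, 1)"
  proof (intro ballI impI)
    fix z assume zV: "z \<in> V" and Ez: "E (1, 1) z"
    have "z = rep (1, 1 mod n 1 + 1) \<or> z = rep (1, n 1)"
      using nbr[of 1 1 z] Ez one n1 by auto
    then have "z = (1, 2) \<or> z = (1, n 1)" using n1 by (auto simp: rep_eq)
    then have "d t z \<le> L - 1"
    proof
      assume z: "z = (1, n 1)"
      have zLo: "z \<in> Lo" using z n1 one by (auto simp: Lo_def)
      have hz: "h z = 1" using z h_Lo[of 1 "n 1"] n1 one B1 by simp
      have "d z t \<le> h t - h z" using Lo_dist[OF zLo tLo] hz ht L_def nm by simp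
      then show ?thesis using dsym tV zV hz ht by simp
    next
      assume z: "z = (1, 2)"
      define c where "c = (1::nat, N 1 + 1)"
      have cLo: "c \<in> Lo" using c_def n1 one by (auto simp: Lo_def)
      have hc: "h c = N 1" using h_Lo[of 1 "N 1 + 1"] c_def n1 one B1 by (simp add: aux)
      have cV: "c \<in> V" using cLo LoV by auto
      have "d (rep (1, 1 mod n 1 + 1)) (rep (1, (1 + (N 1 - 1)) mod n 1 + 1)) \<le> N 1 - 1"
        by (rule d_cyc) (use one in auto)
      moreover have "rep (1, 1 mod n 1 + 1) = z" using z n1 by (simp add: rep_eq)
      moreover have "rep (1, (1 + (N 1 - 1)) mod n 1 + 1) = c" using c_def n1 by (simp add: rep_eq)
      ultimately have d1: "d z c \<le> N 1 - 1" by simp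
      have d2: "d c t \<le> L - N 1" using Lo_dist[OF cLo tLo] hc ht L_def BmN1 by simp
      have "d z t \<le> d z c + d c t" using tri zV cV tV by simp
      then have "d z t \<le> L - 1" using d1 d2 n1 BmN1 L_def by linarith
      then show ?thesis using dsym tV zV by simp
    qed
    then show "d t z \<le> d t (1, 1)" using low nm L_def by simp
  qed
  have p2: "\<forall>z\<in>V. E t z \<longrightarrow> d (1, 1) z \<le> d (1, 1) t"
  proof (intro ballI impI)
    fix z assume zV: "z \<in> V" and Ez: "E t z"
    have low2: "L \<le> d (1, 1) t" using low dsym tV oV by simp
    have "z = rep (m, (N m + 1) mod n m + 1) \<or> z = rep (m, N m)"
      using nbr[of m "N m + 1" z] Ez m1 nm t_def by auto
    then have "z = (m, N m + 2) \<or> z = (m, N m)" using nm by (auto simp: rep_eq)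
    then have "d (1, 1) z \<le> L - 1"
    proof
      assume z: "z = (m, N m + 2)"
      have zLo: "z \<in> Lo" using z nm m1 by (auto simp: Lo_def)
      have "h z = B m + (n m - (N m + 2) + 1)" using z h_Lo[of m "N m + 2"] nm m1 by simp
      then have hz: "h z = L - 1" using nm L_def by simp
      show ?thesis using Lo_dist[OF oLo zLo] hz h11 by simp
    next
      assume z: "z = (m, N m)"
      define c where "c = (m - 1, N (m - 1) + 1)"
      have k1: "1 \<le> m - 1" "m - 1 \<le> m" using m2 by auto
      have nk: "n (m - 1) = 2 * N (m - 1)" "2 \<le> N (m - 1)" using nN[OF k1] by auto
      have cLo: "c \<in> Lo" using c_def nk k1 by (auto simp: Lo_def)
      have "h c = B (m - 1) + (n (m - 1) - (N (m - 1) + 1) + 1)" unfolding c_def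
        by (rule h_Lo) (use k1 nk in auto)
      moreover have "n (m - 1) - (N (m - 1) + 1) + 1 = N (m - 1)" using nk by (intro aux) auto
      moreover have "B m = B (m - 1) + N (m - 1)" using B_Suc[of "m - 1"] m2 by (cases m) auto
      ultimately have hc: "h c = B m" by simp
      have cV: "c \<in> V" using cLo LoV by auto
      have d1: "d (1, 1) c \<le> B m" using Lo_dist[OF oLo cLo] hc h11 by simp
      have "d (rep (m, 0 mod n m + 1)) (rep (m, (0 + (N m - 1)) mod n m + 1)) \<le> N m - 1"
        by (rule d_cyc) (use m1 in auto)
      moreover have "rep (m, 0 mod n m + 1) = c" using c_def m2 by (simp add: rep_eq)
      moreover have "rep (m, (0 + (N m - 1)) mod n m + 1) = z" using z nm by (simp add: rep_eq)
      ultimately have d2: "d c z \<le> N m - 1" by simp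
      have "d (1, 1) z \<le> d (1, 1) c + d c z" using tri oV cV zV by simp
      then show ?thesis using d1 d2 L_def nm by simp
    qed
    then show "d (1, 1) z \<le> d (1, 1) t" using low2 nm L_def by simp
  qed
  show ?thesis unfolding mmd_def using p1 p2 t_def by simp
qed


definition pi :: "nat \<times> nat \<Rightarrow> nat \<times> nat" where
  "pi a = (if a = (1, 1) then (m, N m + 1) else (fst a, snd a + N (fst a)))"

lemma pi_facts: assumes "a \<in> W0"
  shows "mmd a (pi a) \<and> a \<noteq> pi a \<and> a \<in> V \<and> pi a \<in> V \<and> pi a \<notin> W0"
proof (cases "a = (1, 1)")
  case True
  have t: "(m, N m + 1) \<in> Lo" using t_facts by simp
  have nm: "2 \<le> N m" using nN[of m] m2 by auto
  then have "(m, N m + 1) \<notin> W0" using m2 by (auto simp: W0_def)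
  moreover have "(1, 1) \<noteq> (m, N m + 1)" using m2 by simp
  moreover have "pi a = (m, N m + 1)" using True by (simp add: pi_def)
  moreover have "a \<in> V" using W0V assms by auto
  moreover have "(m, N m + 1) \<in> V" using t LoV by auto
  ultimately show ?thesis using True mmd_b by simp
next
  case False
  then obtain i s where a: "a = (i, s)" "1 \<le> i" "i \<le> m" "2 \<le> s" "s \<le> N i"
    using assms unfolding W0_def by auto
  have nn: "n i = 2 * N i" "2 \<le> N i" using nN a by auto
  have pa: "pi a = (i, s + N i)" using a False by (simp add: pi_def)
  have "(i, s + N i) \<in> Lo" using a nn by (auto simp: Lo_def)
  moreover have "(i, s + N i) \<notin> W0" using a nn by (auto simp: W0_def)
  ultimately show ?thesis using mmd_a[OF a(2-5)] a pa LoV W0V assms by auto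
qed

lemma pi_inj: "a \<in> W0 \<Longrightarrow> b \<in> W0 \<Longrightarrow> pi a = pi b \<Longrightarrow> a = b"
  unfolding W0_def pi_def by (auto split: if_splits)

lemma finW0: "finite W0" using finite_subset[OF W0V finV] .

lemma lower: assumes "strong_resolving_set V E W" "finite W" shows "card W0 \<le> card W"
proof -
  have ex: "\<exists>w\<in>W. w = a \<or> w = pi a" if "a \<in> W0" for a
  proof -
    have f: "mmd a (pi a)" "a \<noteq> pi a" "a \<in> V" "pi a \<in> V" using pi_facts[OF that] by auto
    then obtain w where "w \<in> W" "strongly_resolves V E w a (pi a)"
      using assms(1) unfolding strong_resolving_set_def by blast
    then show ?thesis using mmd_res[OF f(1)] by blast
  qed
  define g where "g a = (SOME w. w \<in> W \<and> (w = a \<or> w = pi a))" for a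
  have g: "g a \<in> W \<and> (g a = a \<or> g a = pi a)" if "a \<in> W0" for a
    unfolding g_def using someI_ex[of "\<lambda>w. w \<in> W \<and> (w = a \<or> w = pi a)"] ex[OF that] by blast
  have "inj_on g W0"
  proof (rule inj_onI)
    fix a b assume ab: "a \<in> W0" "b \<in> W0" "g a = g b"
    have na: "pi a \<notin> W0" and nb: "pi b \<notin> W0" using pi_facts ab by auto
    from g[OF ab(1)] g[OF ab(2)] ab(3) consider "a = b" | "a = pi b" | "pi a = b" | "pi a = pi b" by metis
    then show "a = b"
    proof cases
      case 2 then show ?thesis using ab nb by simp
    next
      case 3 then show ?thesis using ab na by simp
    next
      case 4 then show ?thesis using pi_inj ab by simp
    qed simp
  qed
  moreover have "g ` W0 \<subseteq> W" using g by auto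
  ultimately show ?thesis using card_inj_on_le assms(2) by blast
qed

lemma card_W0: "card W0 = 1 + (\<Sum>i=1..m. (n i - 2) div 2)"
proof -
  have eq: "W0 = insert (1, 1) (Sigma {1..m} (\<lambda>k. {2..N k}))" unfolding W0_def by auto
  have "(1, 1) \<notin> Sigma {1..m} (\<lambda>k. {2..N k})" by auto
  then have "card W0 = 1 + card (Sigma {1..m} (\<lambda>k. {2..N k}))" unfolding eq by simp
  also have "card (Sigma {1..m} (\<lambda>k. {2..N k})) = (\<Sum>k=1..m. card {2..N k})" by (rule card_SigmaI) auto
  also have "\<dots> = (\<Sum>k=1..m. (n k - 2) div 2)"
  proof (rule sum.cong)
    fix k assume "k \<in> {1..m}"
    then have "n k = 2 * N k" "2 \<le> N k" using nN by auto
    then show "card {2..N k} = (n k - 2) div 2" by simp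
  qed simp
  finally show ?thesis .
qed

lemma sdim_eq: "sdim V E = 1 + (\<Sum>i=1..m. (n i - 2) div 2)"
proof -
  have "sdim V E = card W0" unfolding sdim_def
  proof (rule Least_equality)
    show "\<exists>W. strong_resolving_set V E W \<and> finite W \<and> card W = card W0"
      using srs_W0 finW0 by blast
    show "card W0 \<le> k" if "\<exists>W. strong_resolving_set V E W \<and> finite W \<and> card W = k" for k
      using that lower by blast
  qed
  then show ?thesis using card_W0 by simp
qed

end

theorem theorem3p5:
  fixes m :: nat and n :: "nat \<Rightarrow> nat"
  assumes "m \<ge> 2"
    and "\<forall>i\<in>{1..m}. even (n i) \<and> n i \<ge> 4"
  shows "sdim (chain_V m n) (chain_E m n) = 1 + (\<Sum>i=1..m. (n i - 2) div 2)"
proof -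
  interpret chain m n using assms by unfold_locales auto
  show ?thesis by (rule sdim_eq)
qed

end
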